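(* Let $u$ and $v$ be non-adjacent vertices in a prime $\overline{P_5}$-free graph $G$. Then either $N(u)\cap N(v)$ is a clique, or there exist a vertex $w\in V(G)\setminus (N(u)\cup N(v)\cup\{u,v\})$ and a set $A\subseteq N(u)\cap N(v)$ such that $G[A]$ is anticonnected and $w$ is mixed on $A$.
   Context: All graphs are finite and simple. $N(x)$ is the set of neighbors of $x$. $P_5$ is the path on five vertices and $\overline{P_5}$ its complement; $G$ is $H$-free if it has no induced subgraph isomorphic to $H$. A graph is anticonnected if its complement is connected. A vertex $b\notin X$ is mixed on $X$ if it has both a neighbor and a non-neighbor in $X$. A homogeneous set is a set $X\subseteq V(G)$ with $1<|X|<|V(G)|$ such that no vertex outside $X$ is mixed on $X$. $G$ is prime if $|V(G)|\ge4$ and has no homogeneous set. *)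

theory Defs
  imports Main
begin

definition graph :: "'a set \<Rightarrow> ('a \<Rightarrow> 'a \<Rightarrow> bool) \<Rightarrow> bool" where
  "graph V E \<longleftrightarrow> finite V \<and> (\<forall>x y. E x y \<longrightarrow> E y x) \<and> (\<forall>x. \<not> E x x)
     \<and> (\<forall>x y. E x y \<longrightarrow> x \<in> V \<and> y \<in> V)"

definition nbhd :: "('a \<Rightarrow> 'a \<Rightarrow> bool) \<Rightarrow> 'a \<Rightarrow> 'a set" where
  "nbhd E x = {y. E x y}"

definition clique :: "('a \<Rightarrow> 'a \<Rightarrow> bool) \<Rightarrow> 'a set \<Rightarrow> bool" where
  "clique E X \<longleftrightarrow> (\<forall>x\<in>X. \<forall>y\<in>X. x \<noteq> y \<longrightarrow> E x y)"

definition has_induced :: "'a set \<Rightarrow> ('a \<Rightarrow> 'a \<Rightarrow> bool) \<Rightarrow> 'b set \<Rightarrow> ('b \<Rightarrow> 'b \<Rightarrow> bool) \<Rightarrow> bool" where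
  "has_induced V E W F \<longleftrightarrow> (\<exists>f. inj_on f W \<and> f ` W \<subseteq> V \<and>
      (\<forall>x\<in>W. \<forall>y\<in>W. E (f x) (f y) \<longleftrightarrow> F x y))"

definition P5_adj :: "nat \<Rightarrow> nat \<Rightarrow> bool" where
  "P5_adj i j \<longleftrightarrow> i < 5 \<and> j < 5 \<and> (i = j + 1 \<or> j = i + 1)"

definition coP5_adj :: "nat \<Rightarrow> nat \<Rightarrow> bool" where
  "coP5_adj i j \<longleftrightarrow> i < 5 \<and> j < 5 \<and> i \<noteq> j \<and> \<not> P5_adj i j"

definition coP5_free :: "'a set \<Rightarrow> ('a \<Rightarrow> 'a \<Rightarrow> bool) \<Rightarrow> bool" where
  "coP5_free V E \<longleftrightarrow> \<not> has_induced V E {0..<5::nat} coP5_adj"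

definition mixed :: "('a \<Rightarrow> 'a \<Rightarrow> bool) \<Rightarrow> 'a \<Rightarrow> 'a set \<Rightarrow> bool" where
  "mixed E b X \<longleftrightarrow> b \<notin> X \<and> (\<exists>x\<in>X. E b x) \<and> (\<exists>x\<in>X. \<not> E b x)"

definition homogeneous :: "'a set \<Rightarrow> ('a \<Rightarrow> 'a \<Rightarrow> bool) \<Rightarrow> 'a set \<Rightarrow> bool" where
  "homogeneous V E X \<longleftrightarrow> X \<subseteq> V \<and> 1 < card X \<and> card X < card V \<and>
     (\<forall>b\<in>V - X. \<not> mixed E b X)"

definition prime_graph :: "'a set \<Rightarrow> ('a \<Rightarrow> 'a \<Rightarrow> bool) \<Rightarrow> bool" where
  "prime_graph V E \<longleftrightarrow> card V \<ge> 4 \<and> (\<nexists>X. homogeneous V E X)"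

definition connected_on :: "('a \<Rightarrow> 'a \<Rightarrow> bool) \<Rightarrow> 'a set \<Rightarrow> bool" where
  "connected_on E X \<longleftrightarrow> X \<noteq> {} \<and>
     (\<forall>x\<in>X. \<forall>y\<in>X. (x, y) \<in> ({(a, b). a \<in> X \<and> b \<in> X \<and> E a b})\<^sup>*)"

definition anticonnected :: "('a \<Rightarrow> 'a \<Rightarrow> bool) \<Rightarrow> 'a set \<Rightarrow> bool" where
  "anticonnected E X \<longleftrightarrow> connected_on (\<lambda>a b. a \<noteq> b \<and> \<not> E a b) X"

end

theory Submission
  imports Defs
begin

lemma coP5_contra:
  assumes g: "graph V E" and fr: "coP5_free V E"
    and inV: "u \<in> V" "v \<in> V" "z \<in> V" "a \<in> V" "b \<in> V"
    and e: "E u z" "E u a" "E u b" "E v a" "E v b" "E z a"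
    and ne: "\<not> E u v" "\<not> E z v" "\<not> E z b" "\<not> E a b"
    and d: "distinct [u,v,z,b,a]"
  shows False
proof -
  have sym: "\<And>x y. E x y \<Longrightarrow> E y x" using g unfolding graph_def by blast
  have irr: "\<And>x. \<not> E x x" using g unfolding graph_def by blast
  have sym_neg: "\<not> E v u" "\<not> E v z" "\<not> E b z" "\<not> E b a" using ne sym by blast+
  define f where "f = (\<lambda>i::nat. if i = 0 then u else if i = 1 then v else if i = 2 then z
      else if i = 3 then b else a)"
  have S: "{0..<5::nat} = {0,1,2,3,4}" by auto
  have "has_induced V E {0..<5::nat} coP5_adj"
    unfolding has_induced_def
  proof (intro exI conjI)
    show "inj_on f {0..<5}" using d unfolding S inj_on_def f_def by auto
    show "f ` {0..<5} \<subseteq> V" using inV unfolding S f_def by auto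
    show "\<forall>x\<in>{0..<5}. \<forall>y\<in>{0..<5}. E (f x) (f y) = coP5_adj x y"
      unfolding S f_def coP5_adj_def P5_adj_def
      using e ne irr sym[OF e(1)] sym[OF e(2)] sym[OF e(3)] sym[OF e(4)] sym[OF e(5)] sym[OF e(6)]
        ne(1) ne(2) ne(3) ne(4) sym_neg by auto
  qed
  thus False using fr unfolding coP5_free_def by blast
qed

lemma antiedge:
  assumes "(p,q) \<in> R\<^sup>*" "E z p" "\<not> E z q"
  shows "\<exists>a b. (a,b) \<in> R \<and> E z a \<and> \<not> E z b"
  using assms
proof (induction rule: rtrancl_induct)
  case base thus ?case by simp
next
  case (step y q)
  show ?case
  proof (cases "E z y")
    case True thus ?thesis using step by blast
  next
    case False thus ?thesis using step by blast
  qed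
qed

theorem lemma2p8:
  fixes V :: "'a set" and E :: "'a \<Rightarrow> 'a \<Rightarrow> bool" and u v :: 'a
  assumes "graph V E" and "prime_graph V E" and "coP5_free V E"
    and "u \<in> V" and "v \<in> V" and "u \<noteq> v" and "\<not> E u v"
  shows "clique E (nbhd E u \<inter> nbhd E v) \<or>
    (\<exists>w A. w \<in> V - (nbhd E u \<union> nbhd E v \<union> {u, v}) \<and>
       A \<subseteq> nbhd E u \<inter> nbhd E v \<and> anticonnected E A \<and> mixed E w A)"
proof (subst disj_commute, rule disjCI)
  assume nc: "\<not> clique E (nbhd E u \<inter> nbhd E v)"
  define C where "C = nbhd E u \<inter> nbhd E v"
  have g: "graph V E" by fact
  have sym: "\<And>x y. E x y \<Longrightarrow> E y x" using g unfolding graph_def by blast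
  have irr: "\<And>x. \<not> E x x" using g unfolding graph_def by blast
  have inV: "\<And>x y. E x y \<Longrightarrow> x \<in> V \<and> y \<in> V" using g unfolding graph_def by blast
  have finV: "finite V" using g unfolding graph_def by blast
  have CV: "C \<subseteq> V" unfolding C_def nbhd_def using inV by blast
  obtain x y where xy: "x \<in> C" "y \<in> C" "x \<noteq> y" "\<not> E x y"
    using nc unfolding clique_def C_def by blast
  define R where "R = {(a,b). a \<in> C \<and> b \<in> C \<and> (a \<noteq> b \<and> \<not> E a b)}"
  define A where "A = {c. (x,c) \<in> R\<^sup>*}"
  have AC: "A \<subseteq> C"
  proof
    fix c assume "c \<in> A"
    hence "(x,c) \<in> R\<^sup>*" unfolding A_def by simp
    thus "c \<in> C" using xy(1) by (induction rule: rtrancl_induct) (auto simp: R_def)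
  qed
  have xA: "x \<in> A" and yA: "y \<in> A" unfolding A_def R_def using xy by auto
  define RA where "RA = {(a,b). a \<in> A \<and> b \<in> A \<and> (a \<noteq> b \<and> \<not> E a b)}"
  have toRA: "(x,c) \<in> RA\<^sup>*" if "(x,c) \<in> R\<^sup>*" for c
    using that
  proof (induction rule: rtrancl_induct)
    case base thus ?case by simp
  next
    case (step y' c')
    have "y' \<in> A" "c' \<in> A" using step unfolding A_def by auto
    hence "(y',c') \<in> RA" using step(2) unfolding RA_def R_def by auto
    with step(3) show ?case by (rule rtrancl_into_rtrancl)
  qed
  have symRA: "sym (RA\<^sup>*)" by (rule sym_rtrancl) (unfold sym_def RA_def, blast intro: sym)
  have anti: "anticonnected E A"
    unfolding anticonnected_def connected_on_def
  proof (intro conjI ballI)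
    show "A \<noteq> {}" using xA by auto
    fix p q assume "p \<in> A" "q \<in> A"
    hence "(x,p) \<in> RA\<^sup>*" "(x,q) \<in> RA\<^sup>*" using toRA unfolding A_def by auto
    hence "(p,x) \<in> RA\<^sup>*" using symRA unfolding sym_def by blast
    hence "(p,q) \<in> RA\<^sup>*" using \<open>(x,q) \<in> RA\<^sup>*\<close> by (rule rtrancl_trans)
    thus "(p, q) \<in> {(a, b). a \<in> A \<and> b \<in> A \<and> a \<noteq> b \<and> \<not> E a b}\<^sup>*"
      unfolding RA_def by simp
  qed
  have finA: "finite A" using finite_subset[OF subset_trans[OF AC CV] finV] .
  have cA: "1 < card A"
  proof -
    have "{x,y} \<subseteq> A" using xA yA by auto
    hence "card {x,y} \<le> card A" using finA by (rule card_mono[rotated])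
    thus ?thesis using xy(3) by simp
  qed
  have uC: "u \<notin> C" unfolding C_def nbhd_def using irr by auto
  have cV: "card A < card V"
  proof (rule psubset_card_mono[OF finV])
    show "A \<subset> V" using AC CV uC \<open>u \<in> V\<close> by blast
  qed
  obtain z where z: "z \<in> V - A" "mixed E z A"
    using assms(2) AC CV cA cV unfolding prime_graph_def homogeneous_def by blast
  have zC: "z \<notin> C"
  proof
    assume "z \<in> C"
    have "E z a" if "a \<in> A" for a
    proof (rule ccontr)
      assume "\<not> E z a"
      hence "\<not> E a z" using sym by blast
      hence "(a,z) \<in> R" using that AC \<open>z \<in> C\<close> z(1) unfolding R_def by auto
      hence "z \<in> A" using that unfolding A_def by auto
      thus False using z by auto
    qed
    thus False using z(2) unfolding mixed_def by auto
  qed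
  obtain a b where ab: "(a,b) \<in> RA" "E z a" "\<not> E z b"
  proof -
    obtain p q where pq: "p \<in> A" "q \<in> A" "E z p" "\<not> E z q" using z(2) unfolding mixed_def by auto
    have "(p,q) \<in> RA\<^sup>*" using anti pq unfolding anticonnected_def connected_on_def RA_def by auto
    thus ?thesis using antiedge pq that by metis
  qed
  have abA: "a \<in> C" "b \<in> C" "a \<noteq> b" "\<not> E a b" "a \<in> A" "b \<in> A" using ab AC unfolding RA_def by auto
  have zu: "z \<noteq> u" using abA(2) ab(3) unfolding C_def nbhd_def by auto
  have zv: "z \<noteq> v" using abA(2) ab(3) unfolding C_def nbhd_def by auto
  have zab: "z \<noteq> a" "z \<noteq> b" using z abA by auto
  have auv: "a \<noteq> u" "a \<noteq> v" "b \<noteq> u" "b \<noteq> v" using abA uC unfolding C_def nbhd_def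
    using irr by auto
  have Ea: "E u a" "E v a" "E u b" "E v b" using abA unfolding C_def nbhd_def by auto
  have abV: "a \<in> V" "b \<in> V" using abA CV by auto
  show "\<exists>w A. w \<in> V - (nbhd E u \<union> nbhd E v \<union> {u, v}) \<and>
       A \<subseteq> nbhd E u \<inter> nbhd E v \<and> anticonnected E A \<and> mixed E w A"
  proof (cases "z \<in> nbhd E u \<union> nbhd E v")
    case False
    thus ?thesis using z zu zv AC anti unfolding C_def by blast
  next
    case True
    show ?thesis
    proof (cases "E u z")
      case True
      hence "\<not> E v z" using zC unfolding C_def nbhd_def by simp
      hence "\<not> E z v" using sym by blast
      hence False using coP5_contra[OF g assms(3) \<open>u \<in> V\<close> \<open>v \<in> V\<close> _ abV(1) abV(2),
          of z] z(1) True Ea ab(2,3) abA(4) assms(6,7) zu zv zab auv abA(3)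
        by simp
      thus ?thesis ..
    next
      case False
      hence Evz: "E v z" and nuz: "\<not> E u z" using \<open>z \<in> nbhd E u \<union> nbhd E v\<close> unfolding nbhd_def
        by auto
      have nvu: "\<not> E v u" using assms(7) sym by blast
      have "\<not> E z u" using nuz sym by blast
      hence False using coP5_contra[OF g assms(3) \<open>v \<in> V\<close> \<open>u \<in> V\<close> _ abV(1) abV(2),
          of z] nvu z(1) Evz nuz Ea ab(2,3) abA(4) assms(6) zu zv zab auv abA(3)
        by simp
      thus ?thesis ..
    qed
  qed
qed

end
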